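(* Let $H$ be a CAT($-1$) space, $G<\operatorname{Isom}(H)$ acting cocompactly, and $\Phi\in\mathcal{H}$ a $G$-invariant function. Then $\lambda_\Phi=\lambda_{\hat\Phi}\geq\lambda_{\mathrm{Sym}(\Phi)}$.
   Context: $SH$ is the space of unit speed bi-infinite geodesics in $H$ with metric $\operatorname{dist}(\gamma_1,\gamma_2)=\frac12\int_{-\infty}^{\infty}d(\gamma_1(t),\gamma_2(t))e^{-|t|}dt$, geodesic flow $\mathsf g^t\gamma(s)=\gamma(s+t)$, $G$ acting by composition; every geodesic segment is assumed to extend to a bi-infinite geodesic. $\mathcal{H}$ is the set of bounded Hölder functions $\Phi$ on $SH$ with $\Phi(\gamma_1)=\Phi(\gamma_2)$ whenever $\gamma_1|_{[0,\epsilon]}=\gamma_2|_{[0,\epsilon]}$ for some $\epsilon>0$. $\hat\Phi(\gamma)=\Phi(-\gamma)$ with $-\gamma(t)=\gamma(-t)$, and $\mathrm{Sym}(\Phi)=\frac{\Phi+\hat\Phi}{2}$. For any function $\Psi$ on $SH$ and $p\neq q$, $d^\Psi(p,q)=\int_0^{d(p,q)}\Psi(\mathsf g^t\gamma_{p,q})dt$ with $\gamma_{p,q}\in SH$ a geodesic with $\gamma_{p,q}(0)=p$, $\gamma_{p,q}(d(p,q))=q$. The critical exponent is $\lambda_\Psi=\sup\{\lambda:\sum_{g\in G}e^{-d^\Psi(p,gp)-\lambda d(p,gp)}=\infty\}$ for a fixed $p\in H$ (independent of $p$). *)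

theory Defs
  imports "HOL-Analysis.Analysis"
begin

definition hplane :: "complex set" where
  "hplane = {z. Im z > 0}"

definition hdist :: "complex \<Rightarrow> complex \<Rightarrow> real" where
  "hdist z w = arcosh (1 + (cmod (z - w))\<^sup>2 / (2 * Im z * Im w))"

definition geod_seg :: "(real \<Rightarrow> 'a::metric_space) \<Rightarrow> real \<Rightarrow> 'a \<Rightarrow> 'a \<Rightarrow> bool" where
  "geod_seg c L x y \<longleftrightarrow> 0 \<le> L \<and> c 0 = x \<and> c L = y \<and>
     (\<forall>s\<in>{0..L}. \<forall>t\<in>{0..L}. dist (c s) (c t) = \<bar>s - t\<bar>)"

definition geodesic_space :: "'a::metric_space itself \<Rightarrow> bool" where
  "geodesic_space TYPE('a) \<longleftrightarrow> (\<forall>x y::'a. \<exists>c. geod_seg c (dist x y) x y)"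

text \<open>Comparison points: pbar is a comparison point, on the comparison side [ubar,vbar]
  (of hyperbolic length L), of the point at parameter s of a side of length L.\<close>
definition hcomp_pt :: "complex \<Rightarrow> complex \<Rightarrow> real \<Rightarrow> real \<Rightarrow> complex \<Rightarrow> bool" where
  "hcomp_pt ubar vbar L s pbar \<longleftrightarrow> pbar \<in> hplane \<and> hdist ubar pbar = s \<and> hdist pbar vbar = L - s"

definition tri_comp_pairs ::
  "(real \<Rightarrow> 'a::metric_space) \<Rightarrow> (real \<Rightarrow> 'a) \<Rightarrow> (real \<Rightarrow> 'a) \<Rightarrow> 'a \<Rightarrow> 'a \<Rightarrow> 'a
     \<Rightarrow> complex \<Rightarrow> complex \<Rightarrow> complex \<Rightarrow> ('a \<times> complex) set" where
  "tri_comp_pairs c1 c2 c3 x y z xb yb zb =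
     {(c1 s, pb) | s pb. s \<in> {0..dist x y} \<and> hcomp_pt xb yb (dist x y) s pb} \<union>
     {(c2 s, pb) | s pb. s \<in> {0..dist y z} \<and> hcomp_pt yb zb (dist y z) s pb} \<union>
     {(c3 s, pb) | s pb. s \<in> {0..dist z x} \<and> hcomp_pt zb xb (dist z x) s pb}"

definition CAT_minus1 :: "'a::metric_space itself \<Rightarrow> bool" where
  "CAT_minus1 TYPE('a) \<longleftrightarrow> geodesic_space TYPE('a) \<and>
     (\<forall>(x::'a) y z c1 c2 c3 xb yb zb.
        geod_seg c1 (dist x y) x y \<and> geod_seg c2 (dist y z) y z \<and> geod_seg c3 (dist z x) z x \<and>
        xb \<in> hplane \<and> yb \<in> hplane \<and> zb \<in> hplane \<and>
        hdist xb yb = dist x y \<and> hdist yb zb = dist y z \<and> hdist zb xb = dist z x \<longrightarrow>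
        (\<forall>(p, pb) \<in> tri_comp_pairs c1 c2 c3 x y z xb yb zb.
         \<forall>(q, qb) \<in> tri_comp_pairs c1 c2 c3 x y z xb yb zb. dist p q \<le> hdist pb qb))"

definition SH :: "(real \<Rightarrow> 'a::metric_space) set" where
  "SH = {\<gamma>. \<forall>s t. dist (\<gamma> s) (\<gamma> t) = \<bar>s - t\<bar>}"

definition dist_SH :: "(real \<Rightarrow> 'a::metric_space) \<Rightarrow> (real \<Rightarrow> 'a) \<Rightarrow> real" where
  "dist_SH \<gamma>1 \<gamma>2 = (1/2) * integral\<^sup>L lborel (\<lambda>t. dist (\<gamma>1 t) (\<gamma>2 t) * exp (- \<bar>t\<bar>))"

definition gflow :: "real \<Rightarrow> (real \<Rightarrow> 'a) \<Rightarrow> (real \<Rightarrow> 'a)" where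
  "gflow t \<gamma> = (\<lambda>s. \<gamma> (s + t))"

definition geod_extendable :: "'a::metric_space itself \<Rightarrow> bool" where
  "geod_extendable TYPE('a) \<longleftrightarrow>
     (\<forall>(c::real \<Rightarrow> 'a) L x y. geod_seg c L x y \<longrightarrow> (\<exists>\<gamma>\<in>SH. \<forall>t\<in>{0..L}. \<gamma> t = c t))"

definition Hclass :: "((real \<Rightarrow> 'a::metric_space) \<Rightarrow> real) set" where
  "Hclass = {\<Phi>. (\<exists>B. \<forall>\<gamma>\<in>SH. \<bar>\<Phi> \<gamma>\<bar> \<le> B) \<and>
      (\<exists>C \<alpha>. \<alpha> > 0 \<and> (\<forall>\<gamma>1\<in>SH. \<forall>\<gamma>2\<in>SH. \<bar>\<Phi> \<gamma>1 - \<Phi> \<gamma>2\<bar> \<le> C * dist_SH \<gamma>1 \<gamma>2 powr \<alpha>)) \<and>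
      (\<forall>\<gamma>1\<in>SH. \<forall>\<gamma>2\<in>SH. \<forall>\<epsilon>>0. (\<forall>t\<in>{0..\<epsilon>}. \<gamma>1 t = \<gamma>2 t) \<longrightarrow> \<Phi> \<gamma>1 = \<Phi> \<gamma>2)}"

definition flip :: "(real \<Rightarrow> 'a) \<Rightarrow> (real \<Rightarrow> 'a)" where
  "flip \<gamma> = (\<lambda>t. \<gamma> (- t))"

definition hat :: "((real \<Rightarrow> 'a) \<Rightarrow> real) \<Rightarrow> ((real \<Rightarrow> 'a) \<Rightarrow> real)" where
  "hat \<Phi> = (\<lambda>\<gamma>. \<Phi> (flip \<gamma>))"

definition Sym :: "((real \<Rightarrow> 'a) \<Rightarrow> real) \<Rightarrow> ((real \<Rightarrow> 'a) \<Rightarrow> real)" where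
  "Sym \<Phi> = (\<lambda>\<gamma>. (\<Phi> \<gamma> + hat \<Phi> \<gamma>) / 2)"

text \<open>d^Psi(p,q), with gamma_{p,q} some element of SH with gamma(0)=p, gamma(d(p,q))=q
  (exists by extendability; the choice does not matter for Psi in the relevant classes).
  For p = q the value is 0.\<close>
definition dPsi :: "((real \<Rightarrow> 'a::metric_space) \<Rightarrow> real) \<Rightarrow> 'a \<Rightarrow> 'a \<Rightarrow> real" where
  "dPsi \<Psi> p q = (let \<gamma> = (SOME \<gamma>. \<gamma> \<in> SH \<and> \<gamma> 0 = p \<and> \<gamma> (dist p q) = q)
                  in integral {0..dist p q} (\<lambda>t. \<Psi> (gflow t \<gamma>)))"

definition isometry :: "('a::metric_space \<Rightarrow> 'a) \<Rightarrow> bool" where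
  "isometry g \<longleftrightarrow> bij g \<and> (\<forall>x y. dist (g x) (g y) = dist x y)"

definition isom_subgroup :: "('a::metric_space \<Rightarrow> 'a) set \<Rightarrow> bool" where
  "isom_subgroup G \<longleftrightarrow> (\<forall>g\<in>G. isometry g) \<and> id \<in> G \<and>
     (\<forall>g\<in>G. \<forall>h\<in>G. g \<circ> h \<in> G) \<and> (\<forall>g\<in>G. inv g \<in> G)"

definition cocompact :: "('a::metric_space \<Rightarrow> 'a) set \<Rightarrow> bool" where
  "cocompact G \<longleftrightarrow> (\<exists>K. compact K \<and> (\<forall>x. \<exists>g\<in>G. x \<in> g ` K))"

definition G_invariant :: "('a::metric_space \<Rightarrow> 'a) set \<Rightarrow> ((real \<Rightarrow> 'a) \<Rightarrow> real) \<Rightarrow> bool" where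
  "G_invariant G \<Phi> \<longleftrightarrow> (\<forall>g\<in>G. \<forall>\<gamma>\<in>SH. \<Phi> (g \<circ> \<gamma>) = \<Phi> \<gamma>)"

definition crit_exp :: "('a::metric_space \<Rightarrow> 'a) set \<Rightarrow> ((real \<Rightarrow> 'a) \<Rightarrow> real) \<Rightarrow> 'a \<Rightarrow> ereal" where
  "crit_exp G \<Psi> p = Sup {ereal l | l.
      (\<Sum>\<^sub>\<infinity>g\<in>G. ennreal (exp (- dPsi \<Psi> p (g p) - l * dist p (g p)))) = \<infinity>}"

end

theory Submission
  imports Defs
begin

lemma hdist_ipt: "hdist (Complex 0 (exp u)) (Complex 0 (exp v)) = \<bar>u - v\<bar>"
proof -
  have c: "(cmod (Complex 0 (exp u) - Complex 0 (exp v)))\<^sup>2 = (exp u - exp v)\<^sup>2"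
    by (simp add: cmod_def)
  have e: "1 + (exp u - exp v)\<^sup>2 / (2 * exp u * exp v) = cosh (u - v)"
    by (simp add: cosh_def exp_diff field_simps power2_eq_square)
  have f: "cosh (u - v) = cosh \<bar>u - v\<bar>"
    by (cases "u - v \<ge> 0") (auto simp: cosh_def)
  have "hdist (Complex 0 (exp u)) (Complex 0 (exp v)) = arcosh (cosh \<bar>u - v\<bar>)"
    unfolding hdist_def complex.sel c e f by (rule refl)
  also have "\<dots> = \<bar>u - v\<bar>" by (rule arcosh_cosh_real) simp
  finally show ?thesis .
qed

lemma SH_dist: "\<gamma> \<in> SH \<Longrightarrow> dist (\<gamma> s) (\<gamma> t) = \<bar>s - t\<bar>"
  by (simp add: SH_def)

lemma gflow_SH: "\<gamma> \<in> SH \<Longrightarrow> gflow t \<gamma> \<in> SH"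
  by (simp add: SH_def gflow_def)

lemma flip_SH: "\<gamma> \<in> SH \<Longrightarrow> flip \<gamma> \<in> SH"
  by (simp add: SH_def flip_def abs_minus_commute)

lemma comp_SH: "isometry g \<Longrightarrow> \<gamma> \<in> SH \<Longrightarrow> g \<circ> \<gamma> \<in> SH"
  by (simp add: SH_def isometry_def)

lemma geo_unique:
  fixes \<gamma>1 \<gamma>2 :: "real \<Rightarrow> 'a::metric_space"
  assumes H: "CAT_minus1 TYPE('a)" and S: "\<gamma>1 \<in> SH" "\<gamma>2 \<in> SH"
    and e: "\<gamma>1 0 = x" "\<gamma>2 0 = x" "\<gamma>1 (dist x y) = y" "\<gamma>2 (dist x y) = y"
    and s: "s \<in> {0..dist x y}"
  shows "\<gamma>1 s = \<gamma>2 s"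
proof -
  define d where "d = dist x y"
  define ip where "ip = (\<lambda>u. Complex 0 (exp u))"
  define c3 where "c3 = (\<lambda>s. \<gamma>2 (d - s))"
  define T where "T = tri_comp_pairs \<gamma>1 (\<lambda>_. y) c3 x y y (ip 0) (ip d) (ip d)"
  have hd: "hdist (ip a) (ip b) = \<bar>a - b\<bar>" for a b unfolding ip_def by (rule hdist_ipt)
  have hp: "ip a \<in> hplane" for a unfolding ip_def hplane_def by simp
  have d0: "0 \<le> d" unfolding d_def by simp
  have g1: "geod_seg \<gamma>1 (dist x y) x y"
    using S e d0 unfolding geod_seg_def d_def by (simp add: SH_dist)
  have g2: "geod_seg (\<lambda>_. y) (dist y y) y y"
    unfolding geod_seg_def by simp
  have g3: "geod_seg c3 (dist y x) y x"
    using S e d0 unfolding geod_seg_def d_def c3_def by (simp add: SH_dist dist_commute abs_minus_commute)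
  have all: "\<forall>(p, pb) \<in> T. \<forall>(q, qb) \<in> T. dist p q \<le> hdist pb qb"
    using H g1 g2 g3 hp unfolding CAT_minus1_def T_def
    apply (elim conjE)
    apply (drule spec[of _ x], drule spec[of _ y], drule spec[of _ y], drule spec[of _ \<gamma>1],
           drule spec[of _ "\<lambda>_. y"], drule spec[of _ c3], drule spec[of _ "ip 0"],
           drule spec[of _ "ip d"], drule spec[of _ "ip d"])
    apply (erule mp)
    using d0 by (simp add: hd d_def dist_commute)
  have sd: "0 \<le> s" "s \<le> d" using s d_def by auto
  have m1: "(\<gamma>1 s, ip s) \<in> T"
    unfolding T_def tri_comp_pairs_def hcomp_pt_def using sd hp
    by (auto simp: hd d_def[symmetric])
  have m3: "(\<gamma>2 s, ip s) \<in> T"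
  proof -
    have "(c3 (d - s), ip s) \<in> T"
      unfolding T_def tri_comp_pairs_def hcomp_pt_def using sd hp
      by (auto simp: hd d_def[symmetric] dist_commute)
    then show ?thesis by (simp add: c3_def)
  qed
  have "dist (\<gamma>1 s) (\<gamma>2 s) \<le> hdist (ip s) (ip s)"
    using all m1 m3 by fastforce
  then show ?thesis by (simp add: hd)
qed


lemma Hclass_cont:
  fixes \<Phi> :: "(real \<Rightarrow> 'a::metric_space) \<Rightarrow> real" and A :: "real \<Rightarrow> real \<Rightarrow> 'a"
  assumes P: "\<Phi> \<in> Hclass" and AS: "\<And>t. A t \<in> SH"
    and Ad: "\<And>t s u. dist (A t u) (A s u) = \<bar>t - s\<bar>"
  shows "continuous_on UNIV (\<lambda>t. \<Phi> (A t))"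
proof -
  obtain C \<alpha> where a: "\<alpha> > 0" and hol: "\<And>\<gamma>1 \<gamma>2. \<gamma>1 \<in> SH \<Longrightarrow> \<gamma>2 \<in> SH \<Longrightarrow>
      \<bar>\<Phi> \<gamma>1 - \<Phi> \<gamma>2\<bar> \<le> C * dist_SH \<gamma>1 \<gamma>2 powr \<alpha>"
    using P unfolding Hclass_def by blast
  define K where "K = (1/2) * integral\<^sup>L lborel (\<lambda>u::real. exp (- \<bar>u\<bar>))"
  have K0: "K \<ge> 0" unfolding K_def by (simp add: integral_nonneg)
  have dS: "dist_SH (A s) (A t) = \<bar>s - t\<bar> * K" for s t
  proof -
    have "(\<lambda>u. dist (A s u) (A t u) * exp (- \<bar>u\<bar>)) = (\<lambda>u. \<bar>s - t\<bar> * exp (- \<bar>u\<bar>))"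
      by (simp add: Ad)
    then show ?thesis unfolding dist_SH_def K_def by simp
  qed
  have "isCont (\<lambda>t. \<Phi> (A t)) t" for t
  proof -
    have lim0: "((\<lambda>s. \<bar>s - t\<bar> * K) \<longlongrightarrow> 0) (at t)"
    proof -
      have "((\<lambda>s. \<bar>s - t\<bar> * K) \<longlongrightarrow> \<bar>t - t\<bar> * K) (at t)"
        by (intro tendsto_intros)
      then show ?thesis by simp
    qed
    have "((\<lambda>s. (\<bar>s - t\<bar> * K) powr \<alpha>) \<longlongrightarrow> 0) (at t)"
      by (rule tendsto_zero_powrI[OF lim0 tendsto_const]) (use K0 a in auto)
    then have g0: "((\<lambda>s. C * (\<bar>s - t\<bar> * K) powr \<alpha>) \<longlongrightarrow> 0) (at t)"
      by (rule tendsto_mult_right_zero)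
    have "((\<lambda>s. \<Phi> (A s) - \<Phi> (A t)) \<longlongrightarrow> 0) (at t)"
    proof (rule Lim_null_comparison[OF _ g0])
      show "\<forall>\<^sub>F s in at t. norm (\<Phi> (A s) - \<Phi> (A t)) \<le> C * (\<bar>s - t\<bar> * K) powr \<alpha>"
        using hol[OF AS AS] dS by (intro always_eventually allI) (simp)
    qed
    then have "((\<lambda>s. \<Phi> (A s)) \<longlongrightarrow> \<Phi> (A t)) (at t)"
      by (rule LIM_zero_cancel)
    then show ?thesis unfolding isCont_def .
  qed
  then show ?thesis by (simp add: continuous_on_eq_continuous_at)
qed

lemma cont_flow:
  fixes \<Phi> :: "(real \<Rightarrow> 'a::metric_space) \<Rightarrow> real"
  assumes "\<Phi> \<in> Hclass" "\<gamma> \<in> SH"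
  shows "continuous_on UNIV (\<lambda>t. \<Phi> (gflow t \<gamma>))"
proof -
  have AS: "\<And>t. gflow t \<gamma> \<in> SH" by (rule gflow_SH[OF assms(2)])
  have Ad: "\<And>t s u. dist (gflow t \<gamma> u) (gflow s \<gamma> u) = \<bar>t - s\<bar>"
    by (simp add: gflow_def SH_dist[OF assms(2)])
  show ?thesis by (rule Hclass_cont[OF assms(1) AS Ad])
qed

lemma cont_flipflow:
  fixes \<Phi> :: "(real \<Rightarrow> 'a::metric_space) \<Rightarrow> real"
  assumes "\<Phi> \<in> Hclass" "\<gamma> \<in> SH"
  shows "continuous_on UNIV (\<lambda>t. \<Phi> (flip (gflow t \<gamma>)))"
proof -
  have AS: "\<And>t. flip (gflow t \<gamma>) \<in> SH" by (rule flip_SH[OF gflow_SH[OF assms(2)]])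
  have Ad: "\<And>t s u. dist (flip (gflow t \<gamma>) u) (flip (gflow s \<gamma>) u) = \<bar>t - s\<bar>"
    by (simp add: flip_def gflow_def SH_dist[OF assms(2)])
  show ?thesis by (rule Hclass_cont[OF assms(1) AS Ad])
qed

lemma germ:
  fixes \<Phi> :: "(real \<Rightarrow> 'a::metric_space) \<Rightarrow> real"
  assumes "\<Phi> \<in> Hclass" "\<gamma>1 \<in> SH" "\<gamma>2 \<in> SH" "\<epsilon> > 0" "\<And>t. t \<in> {0..\<epsilon>} \<Longrightarrow> \<gamma>1 t = \<gamma>2 t"
  shows "\<Phi> \<gamma>1 = \<Phi> \<gamma>2"
  using assms unfolding Hclass_def by blast

definition geo :: "'a::metric_space \<Rightarrow> 'a \<Rightarrow> real \<Rightarrow> 'a" where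
  "geo p q = (SOME \<gamma>. \<gamma> \<in> SH \<and> \<gamma> 0 = p \<and> \<gamma> (dist p q) = q)"

lemma dPsi_geo: "dPsi \<Psi> p q = integral {0..dist p q} (\<lambda>t. \<Psi> (gflow t (geo p q)))"
  by (simp add: dPsi_def geo_def Let_def)

lemma geo_ex:
  fixes p q :: "'a::metric_space"
  assumes "CAT_minus1 TYPE('a)" "geod_extendable TYPE('a)"
  shows "geo p q \<in> SH \<and> geo p q 0 = p \<and> geo p q (dist p q) = q"
proof -
  obtain c where c: "geod_seg c (dist p q) p q"
    using assms(1) unfolding CAT_minus1_def geodesic_space_def by blast
  then obtain \<gamma> where "\<gamma> \<in> SH" "\<forall>t\<in>{0..dist p q}. \<gamma> t = c t"
    using assms(2) unfolding geod_extendable_def by blast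
  then have "\<exists>\<gamma>. \<gamma> \<in> SH \<and> \<gamma> 0 = p \<and> \<gamma> (dist p q) = q"
    using c unfolding geod_seg_def by auto
  then show ?thesis unfolding geo_def by (rule someI_ex)
qed

lemma geo_on:
  fixes p q :: "'a::metric_space"
  assumes "CAT_minus1 TYPE('a)" "geod_extendable TYPE('a)"
    and "\<gamma> \<in> SH" "\<gamma> 0 = p" "\<gamma> (dist p q) = q" "s \<in> {0..dist p q}"
  shows "geo p q s = \<gamma> s"
  using geo_unique[OF assms(1), of "geo p q" \<gamma> p q s] geo_ex[OF assms(1,2), of p q] assms by auto

lemma integral_flip_Icc:
  fixes f :: "real \<Rightarrow> real"
  shows "integral {0..d} (\<lambda>t. f (d - t)) = integral {0..d} f"
proof -
  have "integral {-0..-(-d)} (\<lambda>x. (\<lambda>y. f (d + y)) (-x)) = integral {-d..0} (\<lambda>y. f (d + y))"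
    using Henstock_Kurzweil_Integration.integral_reflect_real[where f="\<lambda>y. f (d + y)" and a="-d" and b=0] by simp
  also have "\<dots> = integral {-d..0} (f \<circ> (+) d)" by (simp add: o_def)
  also have "\<dots> = integral {-d+d..0+d} f" by (rule integral_shift_Icc_real)
  finally show ?thesis by simp
qed

lemma dPsi_inv:
  fixes \<Phi> :: "(real \<Rightarrow> 'a::metric_space) \<Rightarrow> real"
  assumes C: "CAT_minus1 TYPE('a)" and E: "geod_extendable TYPE('a)"
    and G: "isom_subgroup G" and g: "g \<in> G" and I: "G_invariant G \<Phi>" and P: "\<Phi> \<in> Hclass"
  shows "dPsi \<Phi> (g x) (g y) = dPsi \<Phi> x y"
proof -
  have ig: "isometry g" using G g unfolding isom_subgroup_def by blast
  define d where "d = dist x y"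
  have dg: "dist (g x) (g y) = d" using ig unfolding isometry_def d_def by blast
  define \<gamma>1 where "\<gamma>1 = geo (g x) (g y)"
  define \<gamma>2 where "\<gamma>2 = geo x y"
  have s2: "\<gamma>2 \<in> SH" "\<gamma>2 0 = x" "\<gamma>2 d = y" using geo_ex[OF C E, of x y] unfolding \<gamma>2_def d_def by auto
  have s1: "\<gamma>1 \<in> SH" using geo_ex[OF C E, of "g x" "g y"] unfolding \<gamma>1_def by auto
  define \<eta> where "\<eta> = g \<circ> \<gamma>2"
  have eS: "\<eta> \<in> SH" using comp_SH[OF ig s2(1)] unfolding \<eta>_def .
  have eq: "\<gamma>1 s = \<eta> s" if "s \<in> {0..d}" for s
    unfolding \<gamma>1_def using geo_on[OF C E eS, of "g x" "g y" s] s2 that dg by (simp add: \<eta>_def)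
  have "integral {0..d} (\<lambda>t. \<Phi> (gflow t \<gamma>1)) = integral {0..d} (\<lambda>t. \<Phi> (gflow t \<gamma>2))"
  proof (rule integral_spike[OF negligible_sing[of d]])
    fix t assume t: "t \<in> {0..d} - {d}"
    have "\<Phi> (gflow t \<gamma>1) = \<Phi> (gflow t \<eta>)"
      by (rule germ[OF P gflow_SH[OF s1] gflow_SH[OF eS], of "d - t"]) (use t eq in \<open>auto simp: gflow_def\<close>)
    also have "gflow t \<eta> = g \<circ> gflow t \<gamma>2" by (auto simp: \<eta>_def gflow_def)
    also have "\<Phi> (g \<circ> gflow t \<gamma>2) = \<Phi> (gflow t \<gamma>2)"
      using I g gflow_SH[OF s2(1)] unfolding G_invariant_def by blast
    finally show "\<Phi> (gflow t \<gamma>2) = \<Phi> (gflow t \<gamma>1)" by simp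
  qed
  then show ?thesis unfolding dPsi_geo dg d_def[symmetric] \<gamma>1_def \<gamma>2_def .
qed

lemma dPsi_hat:
  fixes \<Phi> :: "(real \<Rightarrow> 'a::metric_space) \<Rightarrow> real"
  assumes C: "CAT_minus1 TYPE('a)" and E: "geod_extendable TYPE('a)" and P: "\<Phi> \<in> Hclass"
  shows "dPsi (hat \<Phi>) p q = dPsi \<Phi> q p"
proof -
  define d where "d = dist p q"
  have dq: "dist q p = d" by (simp add: d_def dist_commute)
  define \<gamma> where "\<gamma> = geo p q"
  define \<gamma>' where "\<gamma>' = geo q p"
  have s: "\<gamma> \<in> SH" "\<gamma> 0 = p" "\<gamma> d = q" using geo_ex[OF C E, of p q] unfolding \<gamma>_def d_def by auto
  have s': "\<gamma>' \<in> SH" using geo_ex[OF C E, of q p] unfolding \<gamma>'_def by auto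
  define \<eta> where "\<eta> = (\<lambda>r. \<gamma> (d - r))"
  have eS: "\<eta> \<in> SH" using s(1) unfolding \<eta>_def SH_def by (simp add: abs_minus_commute)
  have eq: "\<gamma>' r = \<gamma> (d - r)" if "r \<in> {0..d}" for r
    unfolding \<gamma>'_def using geo_on[OF C E eS, of q p r] s that dq by (simp add: \<eta>_def)
  have "integral {0..d} (\<lambda>t. \<Phi> (gflow t \<gamma>')) = integral {0..d} (\<lambda>t. \<Phi> (gflow (d - t) \<gamma>'))"
    using integral_flip_Icc[where f="\<lambda>t. \<Phi> (gflow t \<gamma>')" and d=d] by simp
  also have "\<dots> = integral {0..d} (\<lambda>t. \<Phi> (flip (gflow t \<gamma>)))"
  proof (rule integral_spike[OF negligible_sing[of 0]])
    fix t assume t: "t \<in> {0..d} - {0}"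
    show "\<Phi> (flip (gflow t \<gamma>)) = \<Phi> (gflow (d - t) \<gamma>')"
      by (rule germ[OF P flip_SH[OF gflow_SH[OF s(1)]] gflow_SH[OF s'], of t])
         (use t eq in \<open>auto simp: gflow_def flip_def\<close>)
  qed
  finally show ?thesis unfolding dPsi_geo hat_def d_def[symmetric] dq \<gamma>_def \<gamma>'_def by simp
qed

lemma dPsi_Sym:
  fixes \<Phi> :: "(real \<Rightarrow> 'a::metric_space) \<Rightarrow> real"
  assumes C: "CAT_minus1 TYPE('a)" and E: "geod_extendable TYPE('a)" and P: "\<Phi> \<in> Hclass"
  shows "dPsi (Sym \<Phi>) p q = (dPsi \<Phi> p q + dPsi (hat \<Phi>) p q) / 2"
proof -
  define \<gamma> where "\<gamma> = geo p q"
  have s: "\<gamma> \<in> SH" using geo_ex[OF C E, of p q] unfolding \<gamma>_def by auto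
  have i1: "(\<lambda>t. \<Phi> (gflow t \<gamma>)) integrable_on {0..dist p q}"
    by (rule integrable_continuous_interval) (rule continuous_on_subset[OF cont_flow[OF P s]], simp)
  have i2: "(\<lambda>t. \<Phi> (flip (gflow t \<gamma>))) integrable_on {0..dist p q}"
    by (rule integrable_continuous_interval) (rule continuous_on_subset[OF cont_flipflow[OF P s]], simp)
  show ?thesis
    unfolding dPsi_geo Sym_def hat_def \<gamma>_def[symmetric]
    by (simp add: integral_divide integral_add[OF i1 i2])
qed

theorem lemma4p7:
  fixes G :: "('a::metric_space \<Rightarrow> 'a) set"
    and \<Phi> :: "(real \<Rightarrow> 'a) \<Rightarrow> real"
    and p :: 'a
  assumes "CAT_minus1 TYPE('a)"
    and "geod_extendable TYPE('a)"
    and "isom_subgroup G"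
    and "cocompact G"
    and "\<Phi> \<in> Hclass"
    and "G_invariant G \<Phi>"
  shows "crit_exp G \<Phi> p = crit_exp G (hat \<Phi>) p \<and> crit_exp G (hat \<Phi>) p \<ge> crit_exp G (Sym \<Phi>) p"
proof -
  note C = assms(1) and E = assms(2) and G = assms(3) and P = assms(5) and I = assms(6)
  define S where "S = (\<lambda>\<Psi> l. (\<Sum>\<^sub>\<infinity>g\<in>G. ennreal (exp (- dPsi \<Psi> p (g p) - l * dist p (g p)))))"
  have bij: "bij g" if "g \<in> G" for g using G that unfolding isom_subgroup_def isometry_def by blast
  have invG: "inv g \<in> G" if "g \<in> G" for g using G that unfolding isom_subgroup_def by blast
  have isoinv: "isometry (inv g)" if "g \<in> G" for g using G invG[OF that] unfolding isom_subgroup_def by blast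
  have key: "ennreal (exp (- dPsi \<Phi> p (inv g p) - l * dist p (inv g p))) =
          ennreal (exp (- dPsi (hat \<Phi>) p (g p) - l * dist p (g p)))" if g: "g \<in> G" for g l
  proof -
    have ig: "inv g (g p) = p" using bij[OF g] by (simp add: bij_is_inj)
    have "dPsi (hat \<Phi>) p (g p) = dPsi \<Phi> (g p) p" by (rule dPsi_hat[OF C E P])
    also have "\<dots> = dPsi \<Phi> (inv g (g p)) (inv g p)"
      by (rule dPsi_inv[OF C E G invG[OF g] I P, symmetric])
    finally have a: "dPsi (hat \<Phi>) p (g p) = dPsi \<Phi> p (inv g p)" using ig by simp
    have "dist p (g p) = dist (inv g p) (inv g (g p))"
      using isoinv[OF g] unfolding isometry_def by (simp add: dist_commute)
    then have b: "dist p (g p) = dist p (inv g p)" using ig by (simp add: dist_commute)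
    show ?thesis using a b by simp
  qed
  have S1: "S (hat \<Phi>) l = S \<Phi> l" for l
    unfolding S_def
    by (rule infsum_reindex_bij_witness[where i = inv and j = inv])
       (auto simp: inv_inv_eq[OF bij] invG key)
  have S2: "S (Sym \<Phi>) l \<le> S \<Phi> l + S (hat \<Phi>) l" for l
  proof -
    have "S (Sym \<Phi>) l \<le> (\<Sum>\<^sub>\<infinity>g\<in>G. ennreal (exp (- dPsi \<Phi> p (g p) - l * dist p (g p)))
        + ennreal (exp (- dPsi (hat \<Phi>) p (g p) - l * dist p (g p))))"
      unfolding S_def
    proof (rule Infinite_Sum.infsum_mono, (rule nonneg_summable_on_complete, simp)+)
      fix g
      define x where "x = - dPsi \<Phi> p (g p) - l * dist p (g p)"
      define y where "y = - dPsi (hat \<Phi>) p (g p) - l * dist p (g p)"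
      have h: "- dPsi (Sym \<Phi>) p (g p) - l * dist p (g p) = (x + y) / 2"
        unfolding x_def y_def dPsi_Sym[OF C E P] by (simp add: field_simps)
      have ex: "exp ((x + y) / 2) \<le> exp x + exp y"
      proof -
        have "exp ((x + y) / 2) \<le> exp (max x y)" by simp
        also have "\<dots> \<le> exp x + exp y" by (simp add: max_def add_increasing add_increasing2 less_imp_le)
        finally show ?thesis .
      qed
      have "exp (- dPsi (Sym \<Phi>) p (g p) - l * dist p (g p)) \<le> exp x + exp y"
        unfolding h by (rule ex)
      then show "ennreal (exp (- dPsi (Sym \<Phi>) p (g p) - l * dist p (g p))) \<le>
          ennreal (exp (- dPsi \<Phi> p (g p) - l * dist p (g p))) +
          ennreal (exp (- dPsi (hat \<Phi>) p (g p) - l * dist p (g p)))"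
        unfolding x_def[symmetric] y_def[symmetric]
        by (simp add: ennreal_plus[symmetric] ennreal_leI del: ennreal_plus)
    qed
    also have "\<dots> = S \<Phi> l + S (hat \<Phi>) l"
      unfolding S_def by (rule Infinite_Sum.infsum_add; rule nonneg_summable_on_complete; simp)
    finally show ?thesis .
  qed
  have e1: "crit_exp G \<Phi> p = crit_exp G (hat \<Phi>) p"
    using S1 unfolding crit_exp_def S_def by simp
  have "{ereal l | l. S (Sym \<Phi>) l = \<infinity>} \<subseteq> {ereal l | l. S (hat \<Phi>) l = \<infinity>}"
  proof
    fix z assume "z \<in> {ereal l | l. S (Sym \<Phi>) l = \<infinity>}"
    then obtain l where z: "z = ereal l" and inf: "S (Sym \<Phi>) l = \<infinity>" by blast
    have "S (hat \<Phi>) l + S (hat \<Phi>) l = \<infinity>" using S2[of l] S1[of l] inf by (simp add: top_unique)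
    then have "S (hat \<Phi>) l = \<infinity>" by (simp add: ennreal_add_eq_top)
    then show "z \<in> {ereal l | l. S (hat \<Phi>) l = \<infinity>}" using z by blast
  qed
  then have "crit_exp G (Sym \<Phi>) p \<le> crit_exp G (hat \<Phi>) p"
    unfolding crit_exp_def S_def by (rule Sup_subset_mono)
  with e1 show ?thesis by simp
qed

end
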